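(* Consider the setting described in the context and suppose the stepsizes satisfy conditions (A), (B) and (C). Let $u^\star=(x^\star,y^\star)$ satisfy $0\in F(x^\star)+A^Ty^\star$ and $0\in G(y^\star)-Ax^\star$. Then there is a constant $C_U>0$ such that the PDHG iterates satisfy $\|u_k-u^\star\|_{H_k}^2\le C_U$ for all $k$.
   Context: Let $A\in\mathbb{R}^{M\times N}$, let $f$ and $g$ be convex functions on $\mathbb{R}^N$ and $\mathbb{R}^M$, and let $X\subset\mathbb{R}^N$, $Y\subset\mathbb{R}^M$ be convex sets; consider the saddle-point problem $\min_{x\in X}\max_{y\in Y} f(x)+y^TAx-g(y)$. Let $\chi_C$ denote the characteristic function of a set $C$ ($0$ on $C$, $+\infty$ off $C$), and let $F=\partial(f+\chi_X)$, $G=\partial(g+\chi_Y)$. It is assumed that the problem is feasible (such $u^\star$ exists) and that the minimizations below have solutions. The PDHG method with stepsizes $\tau_k,\sigma_k>0$ starts from $x_0,y_0$ and iterates $x_{k+1}=\arg\min_{x\in X} f(x)+\frac{1}{2\tau_k}\|x-(x_k-\tau_kA^Ty_k)\|^2$, $y_{k+1}=\arg\min_{y\in Y} g(y)+\frac{1}{2\sigma_k}\|y-(y_k+\sigma_kA(2x_{k+1}-x_k))\|^2$. Write $u_k=(x_k,y_k)$, $M_k=\begin{pmatrix}\tau_k^{-1}I & -A^T\\ -A & \sigma_k^{-1}I\end{pmatrix}$, $H_k=\begin{pmatrix}\tau_k^{-1}I & 0\\ 0 & \sigma_k^{-1}I\end{pmatrix}$, and for a symmetric (possibly indefinite) matrix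 $M$, $\|u\|_M^2:=u^TMu$. Let $\phi_k=\max\{(\tau_k-\tau_{k+1})/\tau_k,\ (\sigma_k-\sigma_{k+1})/\sigma_k,\ 0\}$. Conditions: (A) the sequences $\{\tau_k\}$ and $\{\sigma_k\}$ are bounded; (B) $\sum_{k\ge0}\phi_k<C_\phi<\infty$ for some constant $C_\phi$; (C) either (C1) there is a constant $L$ with $\tau_k\sigma_k<L<\rho(A^TA)^{-1}$ for all $k>0$ ($\rho$ = spectral radius), or (C2) either $X$ or $Y$ is bounded and there is $c\in(0,1)$ with $\|u_{k+1}-u_k\|_{M_k}^2\ge c\|u_{k+1}-u_k\|_{H_k}^2$ for all $k>0$. *)

theory Defs
  imports "HOL-Analysis.Analysis"
begin

definition char_fun :: "'a set \<Rightarrow> 'a \<Rightarrow> ereal" where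
  "char_fun C x = (if x \<in> C then 0 else \<infinity>)"

definition subdiff :: "('a::real_inner \<Rightarrow> ereal) \<Rightarrow> 'a \<Rightarrow> 'a set" where
  "subdiff h x = {v. h x < \<infinity> \<and> (\<forall>z. h x + ereal (v \<bullet> (z - x)) \<le> h z)}"

text \<open>Real eigenvalues of a real square matrix and spectral radius.
  (Used only for the symmetric matrix A^T A, all of whose eigenvalues are real.)\<close>
definition real_eigenvalue :: "real^'n^'n \<Rightarrow> real \<Rightarrow> bool" where
  "real_eigenvalue B l \<longleftrightarrow> (\<exists>v. v \<noteq> 0 \<and> B *v v = l *\<^sub>R v)"

definition spectral_radius_sym :: "real^'n^'n \<Rightarrow> real" where
  "spectral_radius_sym B = Sup {\<bar>l\<bar> | l. real_eigenvalue B l}"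

text \<open>Weighted squared norm (norm of u in H, squared) with H = diag(tau^-1 I, sg^-1 I), for u = (x,y).\<close>
definition H_norm2 :: "real \<Rightarrow> real \<Rightarrow> real^'n \<Rightarrow> real^'m \<Rightarrow> real" where
  "H_norm2 tau sg x y = (norm x)^2 / tau + (norm y)^2 / sg"

text \<open>Quadratic form \<open>u^T M u\<close> with M = [[tau^-1 I, -A^T],[-A, sg^-1 I]], for u = (x,y).\<close>
definition M_norm2 :: "real^'n^'m \<Rightarrow> real \<Rightarrow> real \<Rightarrow> real^'n \<Rightarrow> real^'m \<Rightarrow> real" where
  "M_norm2 A tau sg x y =
     (norm x)^2 / tau - x \<bullet> (transpose A *v y) - y \<bullet> (A *v x) + (norm y)^2 / sg"

definition phi :: "(nat \<Rightarrow> real) \<Rightarrow> (nat \<Rightarrow> real) \<Rightarrow> nat \<Rightarrow> real" where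
  "phi tau sg k = Max {(tau k - tau (Suc k)) / tau k, (sg k - sg (Suc k)) / sg k, 0}"

end

theory Submission
  imports Defs
begin

lemma prox_vi:
  fixes f :: "'a::real_inner \<Rightarrow> real"
  assumes fc: "convex_on UNIV f" and Xc: "convex X" and t: "t > 0"
    and am: "is_arg_min (\<lambda>z. f z + (norm (z - p))^2 / (2 * t)) (\<lambda>z. z \<in> X) xp"
    and z: "z \<in> X"
  shows "f xp + ((p - xp) \<bullet> (z - xp)) / t \<le> f z"
proof -
  have xpX: "xp \<in> X" using am by (simp add: is_arg_min_def)
  define D where "D = z - xp"
  define Q where "Q = f z - f xp + ((xp - p) \<bullet> D) / t"
  define c where "c = (norm D)^2 / (2*t)"
  have c0: "c \<ge> 0" using t by (simp add: c_def)
  have key: "0 \<le> Q + s * c" if s0: "0 < s" and s1: "s \<le> 1" for s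
  proof -
    have zs: "xp + s *\<^sub>R D = (1 - s) *\<^sub>R xp + s *\<^sub>R z" by (simp add: D_def algebra_simps)
    have zsX: "xp + s *\<^sub>R D \<in> X" unfolding zs using Xc xpX z s0 s1
      by (simp add: convex_def)
    have min: "f xp + (norm (xp - p))^2 / (2 * t) \<le> f (xp + s *\<^sub>R D) + (norm (xp + s *\<^sub>R D - p))^2 / (2 * t)"
      using am zsX unfolding is_arg_min_def by (metis not_less)
    have cv: "f (xp + s *\<^sub>R D) \<le> (1 - s) * f xp + s * f z"
      unfolding zs using convex_onD[OF fc, of s xp z] s0 s1 by simp
    have nr: "(norm (xp + s *\<^sub>R D - p))^2 = (norm (xp - p))^2 + 2 * s * ((xp - p) \<bullet> D) + s^2 * (norm D)^2"
    proof -
      have e: "xp + s *\<^sub>R D - p = (xp - p) + s *\<^sub>R D" by simp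
      show ?thesis unfolding e power2_norm_eq_inner
        by (simp add: inner_add_left inner_add_right inner_commute power2_eq_square algebra_simps)
    qed
    have "0 \<le> s * (f z - f xp) + (2 * s * ((xp - p) \<bullet> D) + s^2 * (norm D)^2) / (2 * t)"
    proof -
      define R where "R = 2 * s * ((xp - p) \<bullet> D) + s^2 * (norm D)^2"
      have "(norm (xp + s *\<^sub>R D - p))^2 / (2 * t) = (norm (xp - p))^2 / (2 * t) + R / (2*t)"
        unfolding nr R_def by (simp add: add_divide_distrib)
      hence "f xp \<le> f (xp + s *\<^sub>R D) + R / (2*t)" using min by simp
      hence "f xp \<le> (1 - s) * f xp + s * f z + R / (2*t)" using cv by simp
      thus ?thesis unfolding R_def[symmetric] by (simp add: algebra_simps)
    qed
    also have "\<dots> = s * (Q + s * c)"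
      using t by (simp add: Q_def c_def field_simps power2_eq_square)
    finally show ?thesis using s0 by (simp add: zero_le_mult_iff)
  qed
  have "Q \<ge> 0"
  proof (rule ccontr)
    assume "\<not> Q \<ge> 0"
    hence Qn: "Q < 0" by simp
    define s where "s = min 1 (- Q / (2 * (c + 1)))"
    have s0: "0 < s" using Qn c0 by (simp add: s_def divide_neg_pos)
    have s1: "s \<le> 1" by (simp add: s_def)
    have "s * c \<le> (- Q / (2 * (c + 1))) * c" using c0 by (intro mult_right_mono) (auto simp: s_def)
    also have "\<dots> < - Q" proof -
      have "Q * c \<le> 0" using Qn c0 by (simp add: mult_nonpos_nonneg)
      thus ?thesis using Qn c0 by (simp add: field_simps)
    qed
    finally show False using key[OF s0 s1] by simp
  qed
  thus ?thesis using t by (simp add: Q_def D_def field_simps inner_commute inner_diff_left inner_diff_right)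
qed

lemma subdiff_char:
  assumes "v \<in> subdiff (\<lambda>z. ereal (f z) + char_fun X z) xs"
  shows "xs \<in> X \<and> (\<forall>z\<in>X. f xs + v \<bullet> (z - xs) \<le> f z)"
proof -
  have fin: "ereal (f xs) + char_fun X xs < \<infinity>" and le: "\<And>z. ereal (f xs) + char_fun X xs + ereal (v \<bullet> (z - xs)) \<le> ereal (f z) + char_fun X z"
    using assms by (auto simp: subdiff_def)
  have xs: "xs \<in> X" using fin by (auto simp: char_fun_def split: if_splits)
  have "f xs + v \<bullet> (z - xs) \<le> f z" if "z \<in> X" for z
    using le[of z] xs that by (simp add: char_fun_def)
  thus ?thesis using xs by blast
qed

lemma tr_inner: "(x::real^'n) \<bullet> (transpose A *v y) = y \<bullet> (A *v x)"
  by (metis transpose_matrix_vector inner_commute dot_lmul_matrix)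

lemma mv_neg: "(A::real^'n^'m) *v (- v) = - (A *v v)"
  by (simp add: matrix_vector_mult_def vec_eq_iff sum_negf)

lemma fejer_alg:
  fixes A :: "real^'n^'m" and xk xp xs :: "real^'n" and yk yp ys :: "real^'m"
  assumes t: "t > 0" and s: "s > 0"
  and h1: "((xk - xp) \<bullet> (xp - xs)) / t - (yk - ys) \<bullet> (A *v (xp - xs)) \<ge> 0"
  and h2: "((yk - yp) \<bullet> (yp - ys)) / s + (A *v ((xp - xs) - (xk - xp))) \<bullet> (yp - ys) \<ge> 0"
  shows "M_norm2 A t s (xp - xs) (yp - ys) + M_norm2 A t s (xp - xk) (yp - yk) \<le> M_norm2 A t s (xk - xs) (yk - ys)"
proof -
  define D where "D = xk - xp" define P where "P = xp - xs"
  define E where "E = yk - yp" define R where "R = yp - ys"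
  have e1: "xk - xs = D + P" "yk - ys = E + R" "xp - xk = - D" "yp - yk = - E"
    by (simp_all add: D_def P_def E_def R_def)
  have B: "(D \<bullet> P) / t + (E \<bullet> R) / s - E \<bullet> (A *v P) - R \<bullet> (A *v D) \<ge> 0"
  proof -
    have a1: "(A *v P) \<bullet> (E + R) = E \<bullet> (A *v P) + R \<bullet> (A *v P)" by (simp add: inner_add_right inner_commute)
    have a2: "R \<bullet> (A *v P - A *v D) = R \<bullet> (A *v P) - R \<bullet> (A *v D)" by (simp add: inner_diff_right)
    show ?thesis
    using h1 h2 unfolding e1(2) D_def[symmetric] P_def[symmetric] E_def[symmetric] R_def[symmetric]
    by (simp add: matrix_vector_mult_diff_distrib inner_add_left inner_diff_left inner_commute
          add_divide_distrib diff_divide_distrib a1 a2)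
  qed
  have "M_norm2 A t s (D + P) (E + R) = M_norm2 A t s P R + M_norm2 A t s (-D) (-E)
      + 2 * ((D \<bullet> P) / t + (E \<bullet> R) / s - E \<bullet> (A *v P) - R \<bullet> (A *v D))"
    unfolding M_norm2_def tr_inner power2_norm_eq_inner
    by (simp add: matrix_vector_mult_add_rdistrib matrix_vector_right_distrib inner_add_left inner_add_right
        inner_commute add_divide_distrib diff_divide_distrib algebra_simps mv_neg)
  note eq = this
  show ?thesis unfolding e1 P_def[symmetric] R_def[symmetric] eq using B by simp
qed

lemma mv_inner_tr: "(A *v u) \<bullet> (A *v w) = ((transpose A ** A) *v u) \<bullet> (w::real^'n)"
  for A :: "real^'n^'m"
  by (metis matrix_vector_mul_assoc[symmetric] transpose_matrix_vector dot_lmul_matrix inner_commute)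

lemma spec_bound:
  fixes A :: "real^'n^'m"
  shows "(norm (A *v v))^2 \<le> spectral_radius_sym (transpose A ** A) * (norm v)^2"
proof -
  define B where "B = transpose A ** A"
  define q where "q = (\<lambda>u::real^'n. (norm (A *v u))^2)"
  have cq: "continuous_on (sphere 0 1) q" unfolding q_def
    by (intro continuous_intros linear_continuous_on matrix_vector_mul_bounded_linear)
  have ne: "sphere (0::real^'n) 1 \<noteq> {}"
  proof -
    have "(axis undefined 1 :: real^'n) \<in> sphere 0 1" by (simp add: norm_axis_1)
    thus ?thesis by blast
  qed
  obtain v0 where v0: "v0 \<in> sphere 0 1" and mx: "\<And>u. u \<in> sphere 0 1 \<Longrightarrow> q u \<le> q v0"
    using continuous_attains_sup[OF compact_sphere ne cq] by blast
  define lam where "lam = q v0"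
  have nv0: "norm v0 = 1" using v0 by simp
  have hom: "q u \<le> lam * (norm u)^2" for u
  proof (cases "u = 0")
    case True thus ?thesis by (simp add: q_def)
  next
    case False
    define w where "w = (1 / norm u) *\<^sub>R u"
    have "w \<in> sphere 0 1" using False by (simp add: w_def)
    hence "q w \<le> lam" using mx by (simp add: lam_def)
    moreover have "q u = (norm u)^2 * q w"
      using False by (simp add: q_def w_def matrix_vector_mult_scaleR power_divide)
    ultimately show ?thesis
      by (metis mult.commute mult_right_mono zero_le_power2)
  qed
  have lam0: "lam \<ge> 0" by (simp add: lam_def q_def)
  have orth: "(A *v v0) \<bullet> (A *v w) - lam * (v0 \<bullet> w) = 0" for w
  proof -
    define g where "g = (A *v v0) \<bullet> (A *v w) - lam * (v0 \<bullet> w)"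
    define c where "c = (norm (A *v w))^2 - lam * (norm w)^2"
    have ineq: "2 * t * g + t^2 * c \<le> 0" for t
    proof -
      have "q (v0 + t *\<^sub>R w) \<le> lam * (norm (v0 + t *\<^sub>R w))^2" by (rule hom)
      moreover have "q (v0 + t *\<^sub>R w) = lam + 2 * t * ((A *v v0) \<bullet> (A *v w)) + t^2 * (norm (A *v w))^2"
        unfolding q_def lam_def power2_norm_eq_inner
        by (simp add: matrix_vector_right_distrib matrix_vector_mult_scaleR inner_add_left inner_add_right
            inner_commute power2_eq_square algebra_simps)
      moreover have "(norm (v0 + t *\<^sub>R w))^2 = 1 + 2 * t * (v0 \<bullet> w) + t^2 * (norm w)^2"
      proof -
        have i1: "v0 \<bullet> v0 = 1" using nv0 by (simp add: norm_eq_1)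
        have "(norm (v0 + t *\<^sub>R w))^2 = v0 \<bullet> v0 + 2 * t * (v0 \<bullet> w) + t^2 * (w \<bullet> w)"
          unfolding power2_norm_eq_inner
          by (simp add: inner_add_left inner_add_right inner_commute power2_eq_square algebra_simps)
        thus ?thesis using i1 by (simp add: power2_norm_eq_inner)
      qed
      ultimately show ?thesis by (simp add: g_def c_def algebra_simps)
    qed
    have "g = 0"
    proof (rule ccontr)
      assume gn: "g \<noteq> 0"
      define K where "K = \<bar>c\<bar> + 1"
      have K: "K > 0" "2 * K + c > 0" by (auto simp: K_def)
      define t where "t = g / K"
      have "2 * t * g + t^2 * c = g^2 * (2 * K + c) / K^2"
        using K by (simp add: t_def field_simps power2_eq_square)
      moreover have "g^2 * (2 * K + c) / K^2 > 0"
        using gn K by (intro divide_pos_pos mult_pos_pos) auto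
      ultimately show False using ineq[of t] by linarith
    qed
    thus ?thesis by (simp add: g_def)
  qed
  have eig: "B *v v0 = lam *\<^sub>R v0"
  proof -
    have "(B *v v0 - lam *\<^sub>R v0) \<bullet> w = 0" for w
      using orth[of w] unfolding B_def mv_inner_tr by (simp add: inner_diff_left)
    from this[of "B *v v0 - lam *\<^sub>R v0"] show ?thesis by simp
  qed
  have v0nz: "v0 \<noteq> 0" using nv0 by auto
  have re: "real_eigenvalue B lam" unfolding real_eigenvalue_def using eig v0nz by blast
  have bdd: "bdd_above {\<bar>l\<bar> | l. real_eigenvalue B l}"
  proof (rule bdd_aboveI)
    fix r assume "r \<in> {\<bar>l\<bar> | l. real_eigenvalue B l}"
    then obtain l u where r: "r = \<bar>l\<bar>" and u: "u \<noteq> 0" "B *v u = l *\<^sub>R u"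
      by (auto simp: real_eigenvalue_def)
    have "\<bar>l\<bar> * norm u = norm (B *v u)" using u by simp
    also have "\<dots> \<le> onorm ((*v) B) * norm u" by (rule onorm[OF matrix_vector_mul_bounded_linear])
    finally show "r \<le> onorm ((*v) B)" using u r by simp
  qed
  have "lam \<le> spectral_radius_sym B"
    unfolding spectral_radius_sym_def using re lam0
    by (intro cSup_upper[OF _ bdd]) (auto intro!: exI[of _ lam])
  hence "q v \<le> spectral_radius_sym B * (norm v)^2"
    using hom[of v] by (meson mult_right_mono order_trans zero_le_power2)
  thus ?thesis by (simp add: q_def B_def)
qed

lemma amgm_aux:
  fixes a b p r :: real assumes p: "p > 0" and r: "r > 0"
  shows "2 * a * b \<le> p * r * (a^2 / p^2 + b^2 / r^2)"
proof -
  have "0 \<le> (a * r - b * p)^2" by simp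
  hence "2 * a * b * (p * r) \<le> a^2 * r^2 + b^2 * p^2" by (simp add: power2_eq_square algebra_simps)
  moreover have "p * r * (a^2 / p^2 + b^2 / r^2) = (a^2 * r^2 + b^2 * p^2) / (p * r)"
    using p r by (simp add: field_simps power2_eq_square)
  moreover have "2 * a * b \<le> (a^2 * r^2 + b^2 * p^2) / (p * r)"
    using calculation(1) p r by (subst pos_le_divide_eq) (auto simp: algebra_simps)
  ultimately show ?thesis by simp
qed

lemma cross_bound:
  fixes A :: "real^'n^'m"
  assumes "\<And>v. norm (A *v v) \<le> beta * norm v"
  shows "\<bar>e \<bullet> (A *v d)\<bar> \<le> norm e * (beta * norm d)"
proof -
  have "\<bar>e \<bullet> (A *v d)\<bar> \<le> norm e * norm (A *v d)" by (rule Cauchy_Schwarz_ineq2)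
  also have "\<dots> \<le> norm e * (beta * norm d)" by (intro mult_left_mono assms) simp
  finally show ?thesis .
qed

lemma M_alt: "M_norm2 A t s d e = (norm d)^2 / t + (norm e)^2 / s - 2 * (e \<bullet> (A *v d))"
  unfolding M_norm2_def tr_inner by simp

lemma coerc1:
  fixes A :: "real^'n^'m"
  assumes t: "t > 0" and s: "s > 0" and rho: "rho \<ge> 0"
    and sb: "\<And>v. (norm (A *v v))^2 \<le> rho * (norm v)^2"
    and th: "t * s * rho \<le> theta"
  shows "(1 - sqrt theta) * H_norm2 t s d e \<le> M_norm2 A t s d e"
proof -
  have nb: "norm (A *v v) \<le> sqrt rho * norm v" for v
    using sb[of v] by (metis norm_ge_zero real_le_rsqrt real_sqrt_mult real_sqrt_abs abs_norm_cancel)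
  have c: "\<bar>e \<bullet> (A *v d)\<bar> \<le> norm e * (sqrt rho * norm d)" by (rule cross_bound[OF nb])
  have am: "2 * norm d * norm e \<le> sqrt t * sqrt s * ((norm d)^2 / (sqrt t)^2 + (norm e)^2 / (sqrt s)^2)"
    using t s by (intro amgm_aux) auto
  hence am': "2 * norm d * norm e \<le> sqrt (t * s) * H_norm2 t s d e"
    using t s by (simp add: H_norm2_def real_sqrt_mult)
  have "sqrt rho * sqrt (t * s) = sqrt (t * s * rho)" by (simp add: real_sqrt_mult)
  also have "\<dots> \<le> sqrt theta" using th by simp
  finally have sq: "sqrt rho * sqrt (t * s) \<le> sqrt theta" .
  have H0: "H_norm2 t s d e \<ge> 0" using t s by (simp add: H_norm2_def)
  have "2 * \<bar>e \<bullet> (A *v d)\<bar> \<le> sqrt rho * (2 * norm d * norm e)" using c by (simp add: algebra_simps)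
  also have "\<dots> \<le> sqrt rho * (sqrt (t * s) * H_norm2 t s d e)" using rho by (intro mult_left_mono am') auto
  also have "\<dots> \<le> sqrt theta * H_norm2 t s d e"
    using sq H0 by (metis mult.assoc mult_right_mono)
  finally have f: "2 * \<bar>e \<bullet> (A *v d)\<bar> \<le> sqrt theta * H_norm2 t s d e" .
  have "M_norm2 A t s d e - (1 - sqrt theta) * H_norm2 t s d e = sqrt theta * H_norm2 t s d e - 2 * (e \<bullet> (A *v d))"
    unfolding M_alt H_norm2_def using t s by (simp add: field_simps)
  thus ?thesis using f by linarith
qed

lemma coercX:
  fixes A :: "real^'n^'m"
  assumes t: "t > 0" and s: "s > 0" and sS: "s \<le> S" and dD: "norm d \<le> D" and b0: "beta \<ge> 0"
    and nb: "\<And>v. norm (A *v v) \<le> beta * norm v"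
  shows "H_norm2 t s d e \<le> 2 * M_norm2 A t s d e + 4 * S * beta^2 * D^2"
proof -
  have D0: "D \<ge> 0" using dD norm_ge_zero order_trans by blast
  have c: "\<bar>e \<bullet> (A *v d)\<bar> \<le> norm e * (beta * D)"
    using cross_bound[OF nb, of e d] dD b0 by (meson mult_left_mono norm_ge_zero order_trans mult_left_mono)
  have sq: "(norm e)^2 / (2 * s) - 2 * norm e * beta * D + 2 * s * beta^2 * D^2 = (norm e - 2 * s * beta * D)^2 / (2 * s)"
    using s by (simp add: field_simps power2_eq_square)
  have "2 * norm e * beta * D \<le> (norm e)^2 / (2 * s) + 2 * s * beta^2 * D^2"
    using sq s by (smt (verit) divide_nonneg_pos zero_le_power2)
  moreover have "s * beta^2 * D^2 \<le> S * beta^2 * D^2" using sS by (intro mult_right_mono) auto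
  moreover have "e \<bullet> (A *v d) \<le> norm e * (beta * D)" using c by linarith
  moreover have "(norm e)^2 / (2 * s) = (1 / 2) * ((norm e)^2 / s)" "2 * norm e * beta * D = 2 * (norm e * (beta * D))"
    "2 * s * beta^2 * D^2 = 2 * (s * beta^2 * D^2)" "4 * S * beta^2 * D^2 = 4 * (S * beta^2 * D^2)"
    "2 * ((norm d)^2 / t + (norm e)^2 / s - 2 * (e \<bullet> (A *v d))) = 2 * ((norm d)^2 / t) + 2 * ((norm e)^2 / s) - 4 * (e \<bullet> (A *v d))"
    by (simp_all add: algebra_simps)
  moreover have "(norm d)^2 / t \<ge> 0" "(norm e)^2 / s \<ge> 0" using t s by auto
  ultimately show ?thesis unfolding M_alt H_norm2_def by linarith
qed

lemma coercY:
  fixes A :: "real^'n^'m"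
  assumes t: "t > 0" and s: "s > 0" and tT: "t \<le> T" and eD: "norm e \<le> D" and b0: "beta \<ge> 0"
    and nb: "\<And>v. norm (A *v v) \<le> beta * norm v"
  shows "H_norm2 t s d e \<le> 2 * M_norm2 A t s d e + 4 * T * beta^2 * D^2"
proof -
  have D0: "D \<ge> 0" using eD norm_ge_zero order_trans by blast
  have c0: "\<bar>e \<bullet> (A *v d)\<bar> \<le> norm e * (beta * norm d)" by (rule cross_bound[OF nb])
  have "norm e * (beta * norm d) \<le> D * (beta * norm d)" using eD b0 by (intro mult_right_mono) auto
  hence c: "\<bar>e \<bullet> (A *v d)\<bar> \<le> norm d * (beta * D)" using c0 by (simp add: algebra_simps)
  have sq: "(norm d)^2 / (2 * t) - 2 * norm d * beta * D + 2 * t * beta^2 * D^2 = (norm d - 2 * t * beta * D)^2 / (2 * t)"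
    using t by (simp add: field_simps power2_eq_square)
  have "2 * norm d * beta * D \<le> (norm d)^2 / (2 * t) + 2 * t * beta^2 * D^2"
    using sq t by (smt (verit) divide_nonneg_pos zero_le_power2)
  moreover have "t * beta^2 * D^2 \<le> T * beta^2 * D^2" using tT by (intro mult_right_mono) auto
  moreover have "e \<bullet> (A *v d) \<le> norm d * (beta * D)" using c by linarith
  moreover have "(norm d)^2/(2*t) = (1/2)*((norm d)^2/t)" "2*norm d*beta*D = 2*(norm d*(beta*D))"
    "2*t*beta^2*D^2 = 2*(t*beta^2*D^2)" "4*T*beta^2*D^2 = 4*(T*beta^2*D^2)"
    "2 * ((norm d)^2 / t + (norm e)^2 / s - 2 * (e \<bullet> (A *v d))) = 2 * ((norm d)^2 / t) + 2 * ((norm e)^2 / s) - 4 * (e \<bullet> (A *v d))"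
    by (simp_all add: algebra_simps)
  moreover have "(norm d)^2 / t \<ge> 0" "(norm e)^2 / s \<ge> 0" using t s by auto
  ultimately show ?thesis unfolding M_alt H_norm2_def by linarith
qed

lemma trans_step:
  assumes t: "t > 0" "t' > 0" and s: "s > 0" "s' > 0"
    and pt: "(t - t') / t \<le> p" and ps: "(s - s') / s \<le> p"
  shows "M_norm2 A t' s' d e \<le> M_norm2 A t s d e + p * H_norm2 t' s' d e"
proof -
  have a: "1 / t' - 1 / t \<le> p / t'"
  proof -
    have "t - t' \<le> p * t" using pt t by (simp add: pos_divide_le_eq)
    hence "(t - t') / (t * t') \<le> (p * t) / (t * t')" using t by (intro divide_right_mono) auto
    thus ?thesis using t by (simp add: field_simps)
  qed
  have b: "1 / s' - 1 / s \<le> p / s'"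
  proof -
    have "s - s' \<le> p * s" using ps s by (simp add: pos_divide_le_eq)
    hence "(s - s') / (s * s') \<le> (p * s) / (s * s')" using s by (intro divide_right_mono) auto
    thus ?thesis using s by (simp add: field_simps)
  qed
  have "(norm d)^2 * (1 / t' - 1 / t) \<le> (norm d)^2 * (p / t')" using a by (intro mult_left_mono) auto
  moreover have "(norm e)^2 * (1 / s' - 1 / s) \<le> (norm e)^2 * (p / s')" using b by (intro mult_left_mono) auto
  ultimately show ?thesis unfolding M_norm2_def H_norm2_def by (simp add: algebra_simps)
qed

lemma h1_alg:
  fixes A :: "real^'n^'m"
  assumes t: "t > 0"
    and h: "((xk - t *\<^sub>R (transpose A *v yk) - xp) \<bullet> (xs - xp)) / t + (- (transpose A *v ys)) \<bullet> (xp - xs) \<le> 0"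
  shows "((xk - xp) \<bullet> (xp - xs)) / t - (yk - ys) \<bullet> (A *v (xp - xs)) \<ge> 0"
proof -
  have e: "((xk - t *\<^sub>R (transpose A *v yk) - xp) \<bullet> (xs - xp)) / t
      = - (((xk - xp) \<bullet> (xp - xs)) / t) + yk \<bullet> (A *v (xp - xs))"
  proof -
    have "(xk - t *\<^sub>R (transpose A *v yk) - xp) \<bullet> (xs - xp) = - ((xk - xp) \<bullet> (xp - xs)) + t * ((xp - xs) \<bullet> (transpose A *v yk))"
      by (simp add: inner_diff_left inner_diff_right inner_commute algebra_simps)
    thus ?thesis using t unfolding tr_inner by (simp add: field_simps)
  qed
  have e2: "(- (transpose A *v ys)) \<bullet> (xp - xs) = - (ys \<bullet> (A *v (xp - xs)))"
    using tr_inner[of "xp - xs" A ys] by (simp add: inner_commute)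
  have e3: "(yk - ys) \<bullet> (A *v (xp - xs)) = yk \<bullet> (A *v (xp - xs)) - ys \<bullet> (A *v (xp - xs))"
    by (simp add: inner_diff_left)
  show ?thesis using h unfolding e e2 e3 by linarith
qed

lemma h2_alg:
  fixes A :: "real^'n^'m"
  assumes s: "s > 0"
    and h: "((yk + s *\<^sub>R (A *v (2 *\<^sub>R xp - xk)) - yp) \<bullet> (ys - yp)) / s + (A *v xs) \<bullet> (yp - ys) \<le> 0"
  shows "((yk - yp) \<bullet> (yp - ys)) / s + (A *v ((xp - xs) - (xk - xp))) \<bullet> (yp - ys) \<ge> 0"
proof -
  have "(yk + s *\<^sub>R (A *v (2 *\<^sub>R xp - xk)) - yp) \<bullet> (ys - yp) = - ((yk - yp) \<bullet> (yp - ys)) - s * ((A *v (2 *\<^sub>R xp - xk)) \<bullet> (yp - ys))"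
    by (simp add: inner_diff_left inner_diff_right inner_add_left inner_commute algebra_simps)
  hence e: "((yk + s *\<^sub>R (A *v (2 *\<^sub>R xp - xk)) - yp) \<bullet> (ys - yp)) / s = - (((yk - yp) \<bullet> (yp - ys)) / s) - (A *v (2 *\<^sub>R xp - xk)) \<bullet> (yp - ys)"
    using s by (simp add: field_simps)
  have e2: "(A *v ((xp - xs) - (xk - xp))) \<bullet> (yp - ys) = (A *v (2 *\<^sub>R xp - xk)) \<bullet> (yp - ys) - (A *v xs) \<bullet> (yp - ys)"
  proof -
    have "(xp - xs) - (xk - xp) = (2 *\<^sub>R xp - xk) - xs" by (simp add: algebra_simps scaleR_2)
    thus ?thesis by (simp only: matrix_vector_mult_diff_distrib inner_diff_left)
  qed
  show ?thesis using h unfolding e e2 by linarith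
qed

theorem mainTheorem3:
  fixes A :: "real^'n^'m"
    and f :: "real^'n \<Rightarrow> real" and g :: "real^'m \<Rightarrow> real"
    and X :: "(real^'n) set" and Y :: "(real^'m) set"
    and tau sigma :: "nat \<Rightarrow> real"
    and x :: "nat \<Rightarrow> real^'n" and y :: "nat \<Rightarrow> real^'m"
    and xs :: "real^'n" and ys :: "real^'m"
  assumes f_convex: "convex_on UNIV f" and g_convex: "convex_on UNIV g"
    and X_convex: "convex X" and Y_convex: "convex Y"
    and tau_pos: "\<And>k. tau k > 0" and sigma_pos: "\<And>k. sigma k > 0"
    and x_step: "\<And>k. is_arg_min
        (\<lambda>z. f z + (norm (z - (x k - tau k *\<^sub>R (transpose A *v y k))))^2 / (2 * tau k))
        (\<lambda>z. z \<in> X) (x (Suc k))"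
    and y_step: "\<And>k. is_arg_min
        (\<lambda>w. g w + (norm (w - (y k + sigma k *\<^sub>R (A *v (2 *\<^sub>R x (Suc k) - x k)))))^2 / (2 * sigma k))
        (\<lambda>w. w \<in> Y) (y (Suc k))"
    and saddle_x: "0 \<in> (\<lambda>v. v + transpose A *v ys) ` subdiff (\<lambda>z. ereal (f z) + char_fun X z) xs"
    and saddle_y: "0 \<in> (\<lambda>v. v - A *v xs) ` subdiff (\<lambda>w. ereal (g w) + char_fun Y w) ys"
    and condA: "bounded (range tau) \<and> bounded (range sigma)"
    and condB: "\<exists>C_phi. summable (phi tau sigma) \<and> (\<Sum>k. phi tau sigma k) < C_phi"
    and condC:
      "(\<exists>L. L * spectral_radius_sym (transpose A ** A) < 1 \<and> (\<forall>k>0. tau k * sigma k < L))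
       \<or> ((bounded X \<or> bounded Y) \<and>
          (\<exists>c. 0 < c \<and> c < 1 \<and>
             (\<forall>k>0. M_norm2 A (tau k) (sigma k) (x (Suc k) - x k) (y (Suc k) - y k)
                    \<ge> c * H_norm2 (tau k) (sigma k) (x (Suc k) - x k) (y (Suc k) - y k))))"
  shows "\<exists>C_U>0. \<forall>k. H_norm2 (tau k) (sigma k) (x k - xs) (y k - ys) \<le> C_U"
proof -
  define E where "E k = M_norm2 A (tau k) (sigma k) (x k - xs) (y k - ys)" for k
  define Hn where "Hn k = H_norm2 (tau k) (sigma k) (x k - xs) (y k - ys)" for k
  define St where "St k = M_norm2 A (tau k) (sigma k) (x (Suc k) - x k) (y (Suc k) - y k)" for k
  have Hn0: "Hn k \<ge> 0" for k using tau_pos[of k] sigma_pos[of k] by (simp add: Hn_def H_norm2_def)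
  have xX: "x (Suc k) \<in> X" for k using x_step[of k] by (simp add: is_arg_min_def)
  have yY: "y (Suc k) \<in> Y" for k using y_step[of k] by (simp add: is_arg_min_def)
  obtain vx where vx: "vx \<in> subdiff (\<lambda>z. ereal (f z) + char_fun X z) xs" "vx + transpose A *v ys = 0"
    using saddle_x by auto
  have vxe: "vx = - (transpose A *v ys)" using vx(2) by (simp add: add_eq_0_iff)
  have sx: "f xs + vx \<bullet> (z - xs) \<le> f z" if "z \<in> X" for z using subdiff_char[OF vx(1)] that by blast
  obtain vy where vy: "vy \<in> subdiff (\<lambda>w. ereal (g w) + char_fun Y w) ys" "vy - A *v xs = 0"
    using saddle_y by auto
  have vye: "vy = A *v xs" using vy(2) by simp
  have sy: "g ys + vy \<bullet> (w - ys) \<le> g w" if "w \<in> Y" for w using subdiff_char[OF vy(1)] that by blast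
  have xsX: "xs \<in> X" using subdiff_char[OF vx(1)] by blast
  have ysY: "ys \<in> Y" using subdiff_char[OF vy(1)] by blast
  have fejer: "M_norm2 A (tau k) (sigma k) (x (Suc k) - xs) (y (Suc k) - ys) + St k \<le> E k" for k
  proof -
    have vi1: "f (x (Suc k)) + (((x k - tau k *\<^sub>R (transpose A *v y k)) - x (Suc k)) \<bullet> (xs - x (Suc k))) / tau k \<le> f xs"
      by (rule prox_vi[OF f_convex X_convex tau_pos x_step xsX])
    have vi2: "g (y (Suc k)) + (((y k + sigma k *\<^sub>R (A *v (2 *\<^sub>R x (Suc k) - x k))) - y (Suc k)) \<bullet> (ys - y (Suc k))) / sigma k \<le> g ys"
      by (rule prox_vi[OF g_convex Y_convex sigma_pos y_step ysY])
    have h1: "((x k - x (Suc k)) \<bullet> (x (Suc k) - xs)) / tau k - (y k - ys) \<bullet> (A *v (x (Suc k) - xs)) \<ge> 0"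
      using tau_pos[of k] vi1 sx[OF xX[of k]] unfolding vxe by (intro h1_alg) auto
    have h2: "((y k - y (Suc k)) \<bullet> (y (Suc k) - ys)) / sigma k + (A *v ((x (Suc k) - xs) - (x k - x (Suc k)))) \<bullet> (y (Suc k) - ys) \<ge> 0"
      using sigma_pos[of k] vi2 sy[OF yY[of k]] unfolding vye by (intro h2_alg) auto
    show ?thesis unfolding E_def St_def by (rule fejer_alg[OF tau_pos sigma_pos h1 h2])
  qed
  obtain a K where a: "a > 0" and K: "K \<ge> 0" and coer: "\<And>k. k \<ge> 1 \<Longrightarrow> Hn k \<le> a * E k + K"
    and stp: "\<And>k. k \<ge> 1 \<Longrightarrow> St k \<ge> 0"
  proof -
    from condC show ?thesis
    proof
      assume "\<exists>L. L * spectral_radius_sym (transpose A ** A) < 1 \<and> (\<forall>k>0. tau k * sigma k < L)"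
      then obtain L where L1: "L * spectral_radius_sym (transpose A ** A) < 1" and L2: "\<And>k. k > 0 \<Longrightarrow> tau k * sigma k < L"
        by blast
      define rho where "rho = spectral_radius_sym (transpose A ** A)"
      have sb: "(norm (A *v v))^2 \<le> rho * (norm v)^2" for v unfolding rho_def by (rule spec_bound)
      have rho0: "rho \<ge> 0" using sb[of "axis undefined 1"] by (simp add: norm_axis_1) (meson order_trans zero_le_power2)
      have L0: "L > 0" using L2[of 1] mult_pos_pos[OF tau_pos[of 1] sigma_pos[of 1]] by linarith
      define theta where "theta = L * rho"
      have th1: "theta < 1" using L1 by (simp add: theta_def rho_def)
      have th0: "theta \<ge> 0" using L0 rho0 by (simp add: theta_def)
      define c where "c = sqrt theta"
      have c1: "c < 1" using th1 th0 by (simp add: c_def)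
      have cb: "(1 - c) * H_norm2 (tau k) (sigma k) d e \<le> M_norm2 A (tau k) (sigma k) d e" if "k \<ge> 1" for k d e
      proof -
        have "tau k * sigma k * rho \<le> theta" unfolding theta_def
          using L2[of k] that rho0 by (intro mult_right_mono) auto
        thus ?thesis unfolding c_def by (rule coerc1[OF tau_pos sigma_pos rho0 sb])
      qed
      show ?thesis
      proof (rule that[of "1 / (1 - c)" 0])
        show "1 / (1 - c) > 0" using c1 by simp
        show "(0::real) \<le> 0" by simp
        fix k :: nat assume k: "k \<ge> 1"
        have "(1 - c) * Hn k \<le> E k" using cb[OF k] unfolding Hn_def E_def .
        thus "Hn k \<le> 1 / (1 - c) * E k + 0" using c1 by (simp add: field_simps)
        have "(1 - c) * H_norm2 (tau k) (sigma k) (x (Suc k) - x k) (y (Suc k) - y k) \<ge> 0"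
          using c1 tau_pos[of k] sigma_pos[of k] by (simp add: H_norm2_def)
        thus "St k \<ge> 0" using cb[OF k, of "x (Suc k) - x k" "y (Suc k) - y k"] unfolding St_def by linarith
      qed
    next
      assume C2: "(bounded X \<or> bounded Y) \<and>
          (\<exists>c. 0 < c \<and> c < 1 \<and>
             (\<forall>k>0. M_norm2 A (tau k) (sigma k) (x (Suc k) - x k) (y (Suc k) - y k)
                    \<ge> c * H_norm2 (tau k) (sigma k) (x (Suc k) - x k) (y (Suc k) - y k)))"
      then obtain c where c: "c > 0" and cM: "\<And>k. k > 0 \<Longrightarrow> St k \<ge> c * H_norm2 (tau k) (sigma k) (x (Suc k) - x k) (y (Suc k) - y k)"
        unfolding St_def by blast
      have stp: "St k \<ge> 0" if "k \<ge> 1" for k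
      proof -
        have "c * H_norm2 (tau k) (sigma k) (x (Suc k) - x k) (y (Suc k) - y k) \<ge> 0"
          using c tau_pos[of k] sigma_pos[of k] by (simp add: H_norm2_def)
        thus ?thesis using cM[of k] that by linarith
      qed
      define beta where "beta = onorm ((*v) A)"
      have b0: "beta \<ge> 0" unfolding beta_def by (rule onorm_pos_le[OF matrix_vector_mul_bounded_linear])
      have nb: "norm (A *v v) \<le> beta * norm v" for v
        unfolding beta_def by (rule onorm[OF matrix_vector_mul_bounded_linear])
      obtain S where S0': "\<forall>v\<in>range sigma. norm v \<le> S" using condA unfolding bounded_iff by blast
      have S: "sigma k \<le> S" for k
      proof -
        have "norm (sigma k) \<le> S" using S0' by blast
        thus ?thesis by simp
      qed
      obtain T where T0': "\<forall>v\<in>range tau. norm v \<le> T" using condA unfolding bounded_iff by blast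
      have T: "tau k \<le> T" for k
      proof -
        have "norm (tau k) \<le> T" using T0' by blast
        thus ?thesis by simp
      qed
      have S0: "S > 0" using S[of 0] sigma_pos[of 0] by linarith
      have T0: "T > 0" using T[of 0] tau_pos[of 0] by linarith
      from C2 have "bounded X \<or> bounded Y" by blast
      thus ?thesis
      proof
        assume "bounded X"
        then obtain B where B: "\<And>z. z \<in> X \<Longrightarrow> norm z \<le> B" unfolding bounded_iff by blast
        define D where "D = B + norm xs"
        have dD: "norm (x k - xs) \<le> D" if k1: "k \<ge> 1" for k
        proof -
          obtain j where j: "k = Suc j" using k1 by (cases k) auto
          have "norm (x k - xs) \<le> norm (x k) + norm xs" by (rule norm_triangle_ineq4)
          thus ?thesis using B[OF xX[of j]] j by (simp add: D_def)
        qed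
        show ?thesis
        proof (rule that[of 2 "4 * S * beta^2 * D^2"])
          show "(2::real) > 0" by simp
          show "4 * S * beta^2 * D^2 \<ge> 0" using S0 by simp
          fix k :: nat assume k: "k \<ge> 1"
          show "Hn k \<le> 2 * E k + 4 * S * beta^2 * D^2"
            unfolding Hn_def E_def by (rule coercX[OF tau_pos sigma_pos S dD[OF k] b0 nb])
          show "St k \<ge> 0" using stp k .
        qed
      next
        assume "bounded Y"
        then obtain B where B: "\<And>z. z \<in> Y \<Longrightarrow> norm z \<le> B" unfolding bounded_iff by blast
        define D where "D = B + norm ys"
        have eD: "norm (y k - ys) \<le> D" if k1: "k \<ge> 1" for k
        proof -
          obtain j where j: "k = Suc j" using k1 by (cases k) auto
          have "norm (y k - ys) \<le> norm (y k) + norm ys" by (rule norm_triangle_ineq4)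
          thus ?thesis using B[OF yY[of j]] j by (simp add: D_def)
        qed
        show ?thesis
        proof (rule that[of 2 "4 * T * beta^2 * D^2"])
          show "(2::real) > 0" by simp
          show "4 * T * beta^2 * D^2 \<ge> 0" using T0 by simp
          fix k :: nat assume k: "k \<ge> 1"
          show "Hn k \<le> 2 * E k + 4 * T * beta^2 * D^2"
            unfolding Hn_def E_def by (rule coercY[OF tau_pos sigma_pos T eD[OF k] b0 nb])
          show "St k \<ge> 0" using stp k .
        qed
      qed
    qed
  qed
  have phi_t: "(tau k - tau (Suc k)) / tau k \<le> phi tau sigma k" for k by (simp add: phi_def)
  have phi_s: "(sigma k - sigma (Suc k)) / sigma k \<le> phi tau sigma k" for k by (simp add: phi_def)
  have phi0: "phi tau sigma k \<ge> 0" for k by (simp add: phi_def)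
  obtain Cp where summ: "summable (phi tau sigma)" using condB by blast
  define Sp where "Sp = (\<Sum>k. phi tau sigma k)"
  define F where "F k = E k + K / a" for k
  have HF: "Hn k \<le> a * F k" if "k \<ge> 1" for k
    using coer[OF that] a by (simp add: F_def algebra_simps)
  have F0: "F k \<ge> 0" if "k \<ge> 1" for k
  proof -
    have "0 \<le> a * F k" using HF[OF that] Hn0[of k] by linarith
    thus ?thesis using a by (simp add: zero_le_mult_iff)
  qed
  have rec: "F (Suc k) * (1 - a * phi tau sigma k) \<le> F k" if k1: "k \<ge> 1" for k
  proof -
    have tr: "E (Suc k) \<le> M_norm2 A (tau k) (sigma k) (x (Suc k) - xs) (y (Suc k) - ys) + phi tau sigma k * Hn (Suc k)"
      unfolding E_def Hn_def
      by (rule trans_step[OF tau_pos tau_pos sigma_pos sigma_pos phi_t phi_s])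
    have "phi tau sigma k * Hn (Suc k) \<le> phi tau sigma k * (a * E (Suc k) + K)"
      using coer[of "Suc k"] phi0[of k] by (intro mult_left_mono) auto
    hence "E (Suc k) \<le> E k + phi tau sigma k * (a * E (Suc k) + K)"
      using tr fejer[of k] stp[OF k1] by linarith
    moreover have "F (Suc k) * (1 - a * phi tau sigma k) = E (Suc k) + K / a - phi tau sigma k * (a * E (Suc k) + K)"
      using a unfolding F_def by (simp add: field_simps)
    ultimately show ?thesis unfolding F_def by linarith
  qed
  have "phi tau sigma \<longlonglongrightarrow> 0" by (rule summable_LIMSEQ_zero[OF summ])
  moreover have "1 / (2 * a) > 0" using a by simp
  ultimately obtain N0 where N0: "\<And>k. k \<ge> N0 \<Longrightarrow> norm (phi tau sigma k - 0) < 1 / (2 * a)"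
    unfolding LIMSEQ_def dist_real_def real_norm_def by blast
  define N where "N = Suc N0"
  have aphi: "a * phi tau sigma k \<le> 1 / 2" if "k \<ge> N" for k
  proof -
    have "phi tau sigma k < 1 / (2 * a)" using N0[of k] that phi0[of k] by (simp add: N_def)
    hence "a * phi tau sigma k < a * (1 / (2 * a))" using a by (intro mult_strict_left_mono) auto
    thus ?thesis using a by simp
  qed
  have stepF: "F (Suc k) \<le> F k * exp (2 * a * phi tau sigma k)" if k: "k \<ge> N" for k
  proof -
    define u where "u = a * phi tau sigma k"
    have u0: "u \<ge> 0" using a phi0[of k] by (simp add: u_def)
    have u1: "u \<le> 1 / 2" using aphi[OF k] by (simp add: u_def)
    have k1: "k \<ge> 1" using k by (simp add: N_def)
    have r: "F (Suc k) * (1 - u) \<le> F k" using rec[OF k1] by (simp add: u_def)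
    have "F (Suc k) \<le> F (Suc k) * (1 - u) * (1 + 2 * u)"
    proof -
      have "(1 - u) * (1 + 2 * u) = 1 + u * (1 - 2 * u)" by (simp add: algebra_simps)
      moreover have "u * (1 - 2 * u) \<ge> 0" using u0 u1 by simp
      ultimately have "(1 - u) * (1 + 2 * u) \<ge> 1" by linarith
      thus ?thesis using F0[of "Suc k"] by (simp add: mult.assoc) (metis mult_left_mono mult.right_neutral)
    qed
    also have "\<dots> \<le> F k * (1 + 2 * u)" using r u0 by (intro mult_right_mono) auto
    also have "\<dots> \<le> F k * exp (2 * u)" using F0[OF k1] by (intro mult_left_mono) (auto intro: exp_ge_add_one_self)
    finally show ?thesis by (simp add: u_def mult.assoc)
  qed
  have indF: "F k \<le> F N * exp (2 * a * (\<Sum>i\<in>{N..<k}. phi tau sigma i))" if "k \<ge> N" for k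
    using that
  proof (induction k rule: dec_induct)
    case base thus ?case by simp
  next
    case (step k)
    have "F (Suc k) \<le> F k * exp (2 * a * phi tau sigma k)" by (rule stepF[OF step.hyps(1)])
    also have "\<dots> \<le> F N * exp (2 * a * (\<Sum>i\<in>{N..<k}. phi tau sigma i)) * exp (2 * a * phi tau sigma k)"
      by (intro mult_right_mono step.IH) auto
    also have "\<dots> = F N * exp (2 * a * (\<Sum>i\<in>{N..<Suc k}. phi tau sigma i))"
      using step.hyps(1) by (simp add: mult.assoc exp_add[symmetric] algebra_simps)
    finally show ?case .
  qed
  have sumb: "(\<Sum>i\<in>{N..<k}. phi tau sigma i) \<le> Sp" for k
    unfolding Sp_def by (rule sum_le_suminf[OF summ]) (auto simp: phi0)
  define G where "G = F N * exp (2 * a * Sp)"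
  have N1: "N \<ge> 1" by (simp add: N_def)
  have G0: "G \<ge> 0" using F0[OF N1] by (simp add: G_def)
  have FG: "F k \<le> G" if "k \<ge> N" for k
  proof -
    have "exp (2 * a * (\<Sum>i\<in>{N..<k}. phi tau sigma i)) \<le> exp (2 * a * Sp)"
      using sumb[of k] a by simp
    hence "F N * exp (2 * a * (\<Sum>i\<in>{N..<k}. phi tau sigma i)) \<le> G"
      unfolding G_def using F0[OF N1] by (intro mult_left_mono) auto
    thus ?thesis using indF[OF that] by linarith
  qed
  define CU where "CU = 1 + (\<Sum>i<N. Hn i) + a * G"
  have s0: "(\<Sum>i<N. Hn i) \<ge> 0" by (intro sum_nonneg Hn0)
  have aG: "a * G \<ge> 0" using a G0 by simp
  show ?thesis
  proof (intro exI conjI allI)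
    show "CU > 0" unfolding CU_def using s0 aG by linarith
    fix k
    show "H_norm2 (tau k) (sigma k) (x k - xs) (y k - ys) \<le> CU"
    proof (cases "k < N")
      case True
      have "Hn k \<le> (\<Sum>i<N. Hn i)" using True by (intro member_le_sum Hn0) auto
      thus ?thesis unfolding CU_def Hn_def[symmetric] using aG by linarith
    next
      case False
      hence kN: "k \<ge> N" by simp
      have "Hn k \<le> a * F k" using HF kN N1 by auto
      also have "\<dots> \<le> a * G" using FG[OF kN] a by simp
      finally show ?thesis unfolding CU_def Hn_def[symmetric] using s0 by linarith
    qed
  qed
qed

end
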